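(* Let $P$ be a set of $n\geq 5$ points in general position in the plane, let $\mathcal{P}$ be the set of all closed segments with both endpoints in $P$, let $\mathcal{S}\subseteq\mathcal{P}$ with $s:=|\mathcal{S}|$, and let $\mathcal{P}':=\mathcal{P}\setminus\mathcal{S}$. Suppose that every pair of distinct segments $a,b\in\mathcal{P}'$ satisfies exactly one of the following: (1) $d_{D(P)}(a,b)=1$ (equivalently $a\cap b=\emptyset$); (2) $d_{D(P)}(a,b)=2$ and there is $f_1\in\mathcal{S}$ with $(a\cup b)\cap f_1=\emptyset$; (3) $d_{D(P)}(a,b)=3$ and there are $f_1,f_2\in\mathcal{S}$ with $a\cap f_1=\emptyset$, $f_1\cap f_2=\emptyset$ and $f_2\cap b=\emptyset$; (4) $d_{D(P)}(a,b)=4$, $n=5$, and there are $f_1,f_2,f_3\in\mathcal{S}$ such that $a\cap f_1=\emptyset=f_3\cap b$, $a\cap h\neq\emptyset$ for $h\in\{f_2,f_3\}$, $b\cap h\neq\emptyset$ for $h\in\{f_1,f_2\}$, $f_i\cap f_{i+1}=\emptyset$ for $i\in\{1,2\}$, and $f_1\cap f_3\neq\emptyset$. Then $\mu(D(P))\geq\binom{n}{2}-s$.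
   Context: General position means no three points collinear. $D(P)$ is the graph with vertex set $\mathcal{P}$, two segments adjacent iff they are disjoint; $d_{D(P)}$ is graph distance in $D(P)$. For a graph $G$ and $U\subseteq V(G)$, two distinct vertices $x,y\in U$ are $U$-mutually visible if $G$ contains a shortest $x$-$y$ path none of whose internal vertices lies in $U$; $U$ is a mutual-visibility set if every two distinct vertices of $U$ are $U$-mutually visible. $\mu(G)$ is the maximum size of a mutual-visibility set of $G$. *)

theory Defs
  imports "HOL-Analysis.Analysis" "HOL-Library.Extended_Nat"
begin

definition is_walk :: "'v set \<Rightarrow> ('v \<Rightarrow> 'v \<Rightarrow> bool) \<Rightarrow> 'v list \<Rightarrow> 'v \<Rightarrow> 'v \<Rightarrow> bool" where
  "is_walk V adj xs x y \<longleftrightarrow> xs \<noteq> [] \<and> hd xs = x \<and> last xs = y \<and> set xs \<subseteq> V \<and>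
     (\<forall>i. Suc i < length xs \<longrightarrow> adj (xs ! i) (xs ! Suc i))"

(* graph distance (infinity if no walk exists); length of a walk = number of edges *)
definition gdist :: "'v set \<Rightarrow> ('v \<Rightarrow> 'v \<Rightarrow> bool) \<Rightarrow> 'v \<Rightarrow> 'v \<Rightarrow> enat" where
  "gdist V adj x y = (INF xs \<in> {xs. is_walk V adj xs x y}. enat (length xs - 1))"

definition is_shortest_path :: "'v set \<Rightarrow> ('v \<Rightarrow> 'v \<Rightarrow> bool) \<Rightarrow> 'v list \<Rightarrow> 'v \<Rightarrow> 'v \<Rightarrow> bool" where
  "is_shortest_path V adj xs x y \<longleftrightarrow> is_walk V adj xs x y \<and> enat (length xs - 1) = gdist V adj x y"

definition mutually_visible :: "'v set \<Rightarrow> ('v \<Rightarrow> 'v \<Rightarrow> bool) \<Rightarrow> 'v set \<Rightarrow> 'v \<Rightarrow> 'v \<Rightarrow> bool" where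
  "mutually_visible V adj U x y \<longleftrightarrow>
     (\<exists>xs. is_shortest_path V adj xs x y \<and> set (butlast (tl xs)) \<inter> U = {})"

definition mutual_visibility_set :: "'v set \<Rightarrow> ('v \<Rightarrow> 'v \<Rightarrow> bool) \<Rightarrow> 'v set \<Rightarrow> bool" where
  "mutual_visibility_set V adj U \<longleftrightarrow> U \<subseteq> V \<and>
     (\<forall>x\<in>U. \<forall>y\<in>U. x \<noteq> y \<longrightarrow> mutually_visible V adj U x y)"

definition mu :: "'v set \<Rightarrow> ('v \<Rightarrow> 'v \<Rightarrow> bool) \<Rightarrow> nat" where
  "mu V adj = Max (card ` {U. mutual_visibility_set V adj U})"

definition general_position :: "(real^2) set \<Rightarrow> bool" where
  "general_position P \<longleftrightarrow>
     (\<forall>a\<in>P. \<forall>b\<in>P. \<forall>c\<in>P. a \<noteq> b \<and> a \<noteq> c \<and> b \<noteq> c \<longrightarrow> \<not> collinear {a, b, c})"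

definition segments :: "(real^2) set \<Rightarrow> (real^2) set set" where
  "segments P = {closed_segment p q | p q. p \<in> P \<and> q \<in> P \<and> p \<noteq> q}"

definition disj_adj :: "(real^2) set \<Rightarrow> (real^2) set \<Rightarrow> bool" where
  "disj_adj a b \<longleftrightarrow> a \<inter> b = {}"

end

theory Submission
  imports Defs
begin

lemma gdist_attained:
  assumes "gdist V adj x y = enat k"
  shows "\<exists>xs. is_walk V adj xs x y \<and> length xs - 1 = k"
proof -
  let ?A = "(\<lambda>xs. enat (length xs - 1)) ` {xs. is_walk V adj xs x y}"
  have ne: "?A \<noteq> {}"
  proof
    assume "?A = {}"
    then have "gdist V adj x y = \<infinity>" unfolding gdist_def by (simp add: top_enat_def)
    with assms show False by simp
  qed
  then obtain j where "j \<in> ?A" by blast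
  then have "Inf ?A \<in> ?A" by (rule wellorder_InfI)
  then show ?thesis using assms unfolding gdist_def by auto
qed

lemma walk_vis:
  assumes "is_walk V adj xs x y" "enat (length xs - 1) = gdist V adj x y"
    "set (butlast (tl xs)) \<inter> U = {}"
  shows "mutually_visible V adj U x y"
  using assms unfolding mutually_visible_def is_shortest_path_def by blast

lemma segments_card:
  assumes "finite P"
  shows "card (segments P) = card P choose 2"
proof -
  have eq: "segments P = (\<lambda>B. convex hull B) ` {B. B \<subseteq> P \<and> card B = 2}"
    unfolding segments_def
  proof (rule set_eqI, rule iffI)
    fix s assume "s \<in> {closed_segment p q |p q. p \<in> P \<and> q \<in> P \<and> p \<noteq> q}"
    then obtain p q where "s = closed_segment p q" "p \<in> P" "q \<in> P" "p \<noteq> q" by blast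
    then show "s \<in> (\<lambda>B. convex hull B) ` {B. B \<subseteq> P \<and> card B = 2}"
      by (auto simp: segment_convex_hull intro!: image_eqI[where x="{p,q}"])
  next
    fix s assume "s \<in> (\<lambda>B. convex hull B) ` {B. B \<subseteq> P \<and> card B = 2}"
    then obtain B where "s = convex hull B" "B \<subseteq> P" "card B = 2" by blast
    then obtain x y where "B = {x,y}" "x \<noteq> y" by (auto simp: card_2_iff)
    then show "s \<in> {closed_segment p q |p q. p \<in> P \<and> q \<in> P \<and> p \<noteq> q}"
      using \<open>s = convex hull B\<close> \<open>B \<subseteq> P\<close> by (auto simp: segment_convex_hull)
  qed
  have inj: "inj_on (\<lambda>B. convex hull B) {B. B \<subseteq> P \<and> card B = 2}"
  proof (rule inj_onI)
    fix A B assume "A \<in> {B. B \<subseteq> P \<and> card B = 2}" "B \<in> {B. B \<subseteq> P \<and> card B = 2}"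
      "convex hull A = convex hull (B :: (real^2) set)"
    then show "A = B"
      by (auto simp: card_2_iff segment_convex_hull[symmetric])
  qed
  show ?thesis unfolding eq using card_image[OF inj] n_subsets[OF assms] by simp
qed

theorem lemma7:
  fixes P :: "(real^2) set" and S :: "(real^2) set set"
  assumes finP: "finite P"
    and n5: "card P \<ge> 5"
    and gp: "general_position P"
    and SsubP: "S \<subseteq> segments P"
    and pairs: "\<forall>a\<in>segments P - S. \<forall>b\<in>segments P - S. a \<noteq> b \<longrightarrow>
       (gdist (segments P) disj_adj a b = 1)
     \<or> (gdist (segments P) disj_adj a b = 2 \<and> (\<exists>f1\<in>S. (a \<union> b) \<inter> f1 = {}))
     \<or> (gdist (segments P) disj_adj a b = 3 \<and>
          (\<exists>f1\<in>S. \<exists>f2\<in>S. a \<inter> f1 = {} \<and> f1 \<inter> f2 = {} \<and> f2 \<inter> b = {}))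
     \<or> (gdist (segments P) disj_adj a b = 4 \<and> card P = 5 \<and>
          (\<exists>f1\<in>S. \<exists>f2\<in>S. \<exists>f3\<in>S. a \<inter> f1 = {} \<and> f3 \<inter> b = {} \<and>
             a \<inter> f2 \<noteq> {} \<and> a \<inter> f3 \<noteq> {} \<and> b \<inter> f1 \<noteq> {} \<and> b \<inter> f2 \<noteq> {} \<and>
             f1 \<inter> f2 = {} \<and> f2 \<inter> f3 = {} \<and> f1 \<inter> f3 \<noteq> {}))"
  shows "int (mu (segments P) disj_adj) \<ge> int (card P choose 2) - int (card S)"
proof -
  let ?V = "segments P"
  let ?U = "segments P - S"
  have finV: "finite ?V" unfolding segments_def
  proof (rule finite_subset)
    show "finite {closed_segment x y |x y. x \<in> P \<and> y \<in> P}"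
      using finite_image_set2[of "\<lambda>p. p \<in> P" "\<lambda>q. q \<in> P" closed_segment] finP by simp
  qed auto
  have mvs: "mutual_visibility_set ?V disj_adj ?U"
    unfolding mutual_visibility_set_def
  proof (intro conjI ballI impI)
    fix a b assume a: "a \<in> ?U" and b: "b \<in> ?U" and ab: "a \<noteq> b"
    note H = bspec[OF bspec[OF pairs a] b, THEN mp, OF ab]
    from H show "mutually_visible ?V disj_adj ?U a b"
    proof (elim disjE conjE bexE)
      assume g: "gdist ?V disj_adj a b = 1"
      then obtain xs where w: "is_walk ?V disj_adj xs a b" "length xs - 1 = 1"
        using gdist_attained[of ?V disj_adj a b 1] by (auto simp: one_enat_def)
      then have "butlast (tl xs) = []"
        by (cases xs; cases "tl xs"; auto)
      then show ?thesis using w g by (intro walk_vis[OF w(1)]) (auto simp: one_enat_def)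
    next
      fix f1 assume g: "gdist ?V disj_adj a b = 2" and f1: "f1 \<in> S" "(a \<union> b) \<inter> f1 = {}"
      show ?thesis
        by (rule walk_vis[where xs="[a,f1,b]"])
           (use a b f1 g SsubP in \<open>auto simp: is_walk_def disj_adj_def less_Suc_eq numeral_eq_enat nth_Cons'\<close>)
    next
      fix f1 f2 assume g: "gdist ?V disj_adj a b = 3" and f: "f1 \<in> S" "f2 \<in> S"
        "a \<inter> f1 = {}" "f1 \<inter> f2 = {}" "f2 \<inter> b = {}"
      show ?thesis
        by (rule walk_vis[where xs="[a,f1,f2,b]"])
           (use a b f g SsubP in \<open>auto simp: is_walk_def disj_adj_def less_Suc_eq numeral_eq_enat nth_Cons'\<close>)
    next
      fix f1 f2 f3 assume g: "gdist ?V disj_adj a b = 4" and "card P = 5" and f: "f1 \<in> S" "f2 \<in> S" "f3 \<in> S"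
        "a \<inter> f1 = {}" "f1 \<inter> f2 = {}" "f2 \<inter> f3 = {}" "f3 \<inter> b = {}"
      have "(4::enat) = enat 4" by (simp add: numeral_eq_enat)
      show ?thesis
        by (rule walk_vis[where xs="[a,f1,f2,f3,b]"])
           (use a b f g SsubP in \<open>auto simp: is_walk_def disj_adj_def less_Suc_eq numeral_eq_enat nth_Cons'\<close>)
    qed
  qed auto
  have fin: "finite (card ` {U. mutual_visibility_set ?V disj_adj U})"
    by (rule finite_imageI, rule finite_subset[of _ "Pow ?V"])
       (use finV in \<open>auto simp: mutual_visibility_set_def\<close>)
  have "card ?U \<le> mu ?V disj_adj"
    unfolding mu_def using mvs fin by (auto intro: Max_ge)
  moreover have "card ?U = card ?V - card S"
    using SsubP finV by (simp add: card_Diff_subset finite_subset)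
  moreover have "card S \<le> card ?V" using SsubP finV by (simp add: card_mono)
  ultimately show ?thesis using segments_card[OF finP] by linarith
qed

end
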